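(* Let $m\geq1$ and let $P,Q\in\mathbb{C}[X_k^{(i)}: k\geq1,\ 1\leq i\leq m]$, where $X_k^{(i)}$ has degree $k\bar e^{(i)}\in\mathbb{N}^m$ (the vector with $k$ in coordinate $i$ and $0$ elsewhere) and degrees of monomials add coordinatewise. Suppose every monomial of $P$ has degree $\leq \bar a$ and every monomial of $Q$ has degree $\leq\bar b$ (coordinatewise). Then the $S_{\bar n}$-inner product $\langle P,Q\rangle_{S_{\bar n}}=\frac{1}{|S_{\bar n}|}\sum_{\sigma\in S_{\bar n}}P(\sigma)\overline{Q(\sigma)}$ does not depend on $\bar n$ for all $\bar n\in\mathbb{N}^m$ with $\bar n\geq\bar a+\bar b$ coordinatewise.
   Context: For $\bar n=(n^{(1)},\dots,n^{(m)})\in\mathbb{N}^m$, $S_{\bar n}=S_{n^{(1)}}\times\cdots\times S_{n^{(m)}}$. The function $X_k^{(i)}$ on $S_{\bar n}$ (defined simultaneously for all $\bar n$) sends $(\sigma^{(1)},\dots,\sigma^{(m)})$ to the number of $k$-cycles of $\sigma^{(i)}$. *)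

theory Defs
  imports Complex_Main "HOL-Combinatorics.Permutations" "HOL-Combinatorics.Orbits" "HOL-Library.Poly_Mapping"
begin

definition num_cycles :: "(nat \<Rightarrow> nat) \<Rightarrow> nat \<Rightarrow> nat \<Rightarrow> nat" where
  "num_cycles p n k = card {orbit p x | x. x \<in> {..<n} \<and> card (orbit p x) = k}"

text \<open>S_nbar = S_{n(0)} x ... x S_{n(m-1)}, tuples represented as functions of the index i < m.\<close>
definition Sn :: "nat \<Rightarrow> (nat \<Rightarrow> nat) \<Rightarrow> (nat \<Rightarrow> nat \<Rightarrow> nat) set" where
  "Sn m n = {\<sigma>. (\<forall>i<m. \<sigma> i permutes {..<n i}) \<and> (\<forall>i\<ge>m. \<sigma> i = id)}"

text \<open>Polynomials in the variables X_k^(i), variable (i,k); a monomial is a finitely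
  supported exponent map (i,k) to exponent.\<close>
type_synonym cpoly = "((nat \<times> nat) \<Rightarrow>\<^sub>0 nat) \<Rightarrow>\<^sub>0 complex"

definition mono_deg :: "((nat \<times> nat) \<Rightarrow>\<^sub>0 nat) \<Rightarrow> nat \<Rightarrow> nat" where
  "mono_deg mo i = (\<Sum>v\<in>{v \<in> Poly_Mapping.keys mo. fst v = i}. snd v * Poly_Mapping.lookup mo v)"

definition eval_cpoly :: "cpoly \<Rightarrow> (nat \<Rightarrow> nat) \<Rightarrow> (nat \<Rightarrow> nat \<Rightarrow> nat) \<Rightarrow> complex" where
  "eval_cpoly P n \<sigma> = (\<Sum>mo\<in>Poly_Mapping.keys P. Poly_Mapping.lookup P mo *
      (\<Prod>v\<in>Poly_Mapping.keys mo. of_nat (num_cycles (\<sigma> (fst v)) (n (fst v)) (snd v)) ^ Poly_Mapping.lookup mo v))"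

definition inner_S :: "nat \<Rightarrow> (nat \<Rightarrow> nat) \<Rightarrow> cpoly \<Rightarrow> cpoly \<Rightarrow> complex" where
  "inner_S m n P Q = (1 / of_nat (card (Sn m n))) *
      (\<Sum>\<sigma>\<in>Sn m n. eval_cpoly P n \<sigma> * cnj (eval_cpoly Q n \<sigma>))"

definition valid_cpoly :: "nat \<Rightarrow> cpoly \<Rightarrow> bool" where
  "valid_cpoly m P \<longleftrightarrow> (\<forall>mo\<in>Poly_Mapping.keys P. \<forall>v\<in>Poly_Mapping.keys mo. fst v < m \<and> snd v \<ge> 1)"

end

theory Submission
  imports Defs
begin

definition shf :: "nat \<Rightarrow> (nat \<Rightarrow> nat) \<Rightarrow> (nat \<Rightarrow> nat)" where
  "shf L X = X(L := Suc (X L))"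

lemma shf_comm: "shf L (shf M X) = shf M (shf L X)"
  by (auto simp: shf_def fun_eq_iff)

inductive pdeg :: "nat \<Rightarrow> ((nat \<Rightarrow> nat) \<Rightarrow> complex) \<Rightarrow> bool" where
  pdegI: "(\<And>L. 1 \<le> L \<Longrightarrow> L \<le> d \<Longrightarrow> pdeg (d - L) (\<lambda>X. f (shf L X) - f X))
    \<Longrightarrow> (\<And>L X. d < L \<Longrightarrow> f (shf L X) = f X) \<Longrightarrow> pdeg d f"

lemma pdeg_const: "pdeg d (\<lambda>_. c)"
proof (induction d arbitrary: c rule: less_induct)
  case (less d)
  show ?case
  proof (rule pdegI)
    fix L assume "1 \<le> L" "L \<le> d"
    then have "d - L < d" by simp
    from less[OF this, of 0] show "pdeg (d - L) (\<lambda>X. c - c)" by simp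
  qed simp
qed

lemma pdeg_zero_eq: "(\<And>X. f X = 0) \<Longrightarrow> pdeg d f"
proof -
  assume "\<And>X. f X = 0"
  then have "f = (\<lambda>_. 0)" by auto
  then show ?thesis using pdeg_const by simp
qed

lemma pdeg_shift: "pdeg d f \<Longrightarrow> pdeg d (\<lambda>X. f (shf M X))"
proof (induction rule: pdeg.induct)
  case (pdegI d f)
  show ?case
  proof (rule pdeg.pdegI)
    fix L assume L: "1 \<le> L" "L \<le> d"
    from pdegI.IH[OF L] show "pdeg (d - L) (\<lambda>X. f (shf M (shf L X)) - f (shf M X))"
      by (simp add: shf_comm)
  next
    fix L X assume "d < L"
    then show "f (shf M (shf L X)) = f (shf M X)" using pdegI.hyps(2) by (simp add: shf_comm)
  qed
qed

lemma pdeg_mono: "pdeg d f \<Longrightarrow> d \<le> d' \<Longrightarrow> pdeg d' f"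
proof (induction arbitrary: d' rule: pdeg.induct)
  case (pdegI d f)
  show ?case
  proof (rule pdeg.pdegI)
    fix L assume L: "1 \<le> L" "L \<le> d'"
    show "pdeg (d' - L) (\<lambda>X. f (shf L X) - f X)"
    proof (cases "L \<le> d")
      case True
      then show ?thesis using pdegI.IH[OF L(1) True, of "d' - L"] pdegI.prems by simp
    next
      case False
      then show ?thesis by (intro pdeg_zero_eq) (simp add: pdegI.hyps(2))
    qed
  next
    fix L X assume "d' < L" then show "f (shf L X) = f X" using pdegI.hyps(2) pdegI.prems by simp
  qed
qed

lemma pdeg_add: "pdeg d f \<Longrightarrow> pdeg d g \<Longrightarrow> pdeg d (\<lambda>X. f X + g X)"
proof (induction d arbitrary: f g rule: less_induct)
  case (less d)
  from less(2) have f1: "\<And>L. 1 \<le> L \<Longrightarrow> L \<le> d \<Longrightarrow> pdeg (d - L) (\<lambda>X. f (shf L X) - f X)"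
     and f2: "\<And>L X. d < L \<Longrightarrow> f (shf L X) = f X" by (auto elim: pdeg.cases)
  from less(3) have g1: "\<And>L. 1 \<le> L \<Longrightarrow> L \<le> d \<Longrightarrow> pdeg (d - L) (\<lambda>X. g (shf L X) - g X)"
     and g2: "\<And>L X. d < L \<Longrightarrow> g (shf L X) = g X" by (auto elim: pdeg.cases)
  show ?case
  proof (rule pdegI)
    fix L assume L: "1 \<le> L" "L \<le> d"
    then have "d - L < d" by simp
    from less(1)[OF this f1[OF L] g1[OF L]]
    show "pdeg (d - L) (\<lambda>X. f (shf L X) + g (shf L X) - (f X + g X))"
      by (simp add: algebra_simps)
  qed (simp add: f2 g2)
qed

lemma pdeg_mult_aux: "d1 + d2 = s \<Longrightarrow> pdeg d1 f \<Longrightarrow> pdeg d2 g \<Longrightarrow> pdeg s (\<lambda>X. f X * g X)"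
proof (induction s arbitrary: d1 d2 f g rule: less_induct)
  case (less s)
  from less(3) have f1: "\<And>L. 1 \<le> L \<Longrightarrow> L \<le> d1 \<Longrightarrow> pdeg (d1 - L) (\<lambda>X. f (shf L X) - f X)"
     and f2: "\<And>L X. d1 < L \<Longrightarrow> f (shf L X) = f X" by (auto elim: pdeg.cases)
  from less(4) have g1: "\<And>L. 1 \<le> L \<Longrightarrow> L \<le> d2 \<Longrightarrow> pdeg (d2 - L) (\<lambda>X. g (shf L X) - g X)"
     and g2: "\<And>L X. d2 < L \<Longrightarrow> g (shf L X) = g X" by (auto elim: pdeg.cases)
  show ?case
  proof (rule pdegI)
    fix L assume L: "1 \<le> L" "L \<le> s"
    have t1: "pdeg (s - L) (\<lambda>X. (f (shf L X) - f X) * g (shf L X))"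
    proof (cases "L \<le> d1")
      case True
      show ?thesis
        by (rule less(1)[of "s - L" "d1 - L" d2]) (use True L less(2) f1 pdeg_shift less(4) in auto)
    next
      case False then show ?thesis by (intro pdeg_zero_eq) (simp add: f2)
    qed
    have t2: "pdeg (s - L) (\<lambda>X. f X * (g (shf L X) - g X))"
    proof (cases "L \<le> d2")
      case True
      show ?thesis
        by (rule less(1)[of "s - L" d1 "d2 - L"]) (use True L less(2) g1 less(3) in auto)
    next
      case False then show ?thesis by (intro pdeg_zero_eq) (simp add: g2)
    qed
    from pdeg_add[OF t1 t2] show "pdeg (s - L) (\<lambda>X. f (shf L X) * g (shf L X) - f X * g X)"
      by (simp add: algebra_simps)
  next
    fix L X assume "s < L" then show "f (shf L X) * g (shf L X) = f X * g X"
      using less(2) f2 g2 by simp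
  qed
qed

lemma pdeg_mult: "pdeg d1 f \<Longrightarrow> pdeg d2 g \<Longrightarrow> pdeg (d1 + d2) (\<lambda>X. f X * g X)"
  using pdeg_mult_aux by blast

lemma pdeg_var: "1 \<le> k \<Longrightarrow> pdeg k (\<lambda>X. of_nat (X k))"
proof (rule pdegI)
  fix L assume "1 \<le> L" "L \<le> k"
  show "pdeg (k - L) (\<lambda>X. of_nat (shf L X k) - of_nat (X k))"
    by (cases "L = k") (auto simp: shf_def pdeg_const intro: pdeg_zero_eq)
next
  fix L X assume "k < L" then show "(of_nat (shf L X k) :: complex) = of_nat (X k)"
    by (simp add: shf_def)
qed

lemma pdeg_power: "pdeg d f \<Longrightarrow> pdeg (e * d) (\<lambda>X. f X ^ e)"
proof (induction e)
  case 0 then show ?case using pdeg_const by simp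
next
  case (Suc e)
  from pdeg_mult[OF Suc(2) Suc(1)[OF Suc(2)]] show ?case by (simp add: add.commute)
qed

lemma pdeg_prod: "finite A \<Longrightarrow> (\<And>v. v \<in> A \<Longrightarrow> pdeg (dg v) (F v)) \<Longrightarrow>
   pdeg (\<Sum>v\<in>A. dg v) (\<lambda>X. \<Prod>v\<in>A. F v X)"
proof (induction A rule: finite_induct)
  case empty then show ?case using pdeg_const by simp
next
  case (insert x A)
  from pdeg_mult[OF insert(4)[of x] insert(3)] insert show ?case by simp
qed

definition cnt :: "'a set \<Rightarrow> ('a \<Rightarrow> 'a) \<Rightarrow> nat \<Rightarrow> nat" where
  "cnt S p k = card {orbit p x | x. x \<in> S \<and> card (orbit p x) = k}"

definition Asum :: "'a set \<Rightarrow> ((nat \<Rightarrow> nat) \<Rightarrow> complex) \<Rightarrow> complex" where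
  "Asum S f = (\<Sum>p\<in>{p. p permutes S}. f (cnt S p))"

definition cycs :: "'a set \<Rightarrow> ('a \<Rightarrow> 'a) set" where
  "cycs T = {c. c permutes T \<and> cyclic_on c T}"

abbreviation conjp :: "('a \<Rightarrow> 'b) \<Rightarrow> 'a set \<Rightarrow> 'b set \<Rightarrow> ('a \<Rightarrow> 'a) \<Rightarrow> ('b \<Rightarrow> 'b)" where
  "conjp h A B \<pi> \<equiv> (\<lambda>x. if x \<in> B then h (\<pi> (inv_into A h x)) else x)"

lemma conjp_orbit:
  assumes "finite A" "bij_betw h A B" "p permutes A" "x \<in> A"
  shows "orbit (conjp h A B p) (h x) = h ` orbit p x"
proof -
  have perm: "permutation p" using assms permutation_permutes by blast
  have "h ` orbit p x = orbit (conjp h A B p) (h x)"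
  proof (rule orbit_inverse)
    show "x \<in> orbit p x" by (rule permutation_self_in_orbit[OF perm])
    fix z assume "z \<in> orbit p x"
    then have z: "z \<in> A" using permutes_orbit_subset[OF assms(3,4)] by blast
    then have "h z \<in> B" "p z \<in> A" using assms(2,3) by (auto dest: bij_betwE simp: permutes_in_image)
    then show "conjp h A B p (h z) = h (p z)" using z assms(2)
      by (simp add: bij_betw_inv_into_left)
  qed
  then show ?thesis by simp
qed

lemma conjp_cnt:
  assumes "finite A" "bij_betw h A B" "p permutes A"
  shows "cnt B (conjp h A B p) = cnt A p"
proof
  fix k
  let ?q = "conjp h A B p"
  have inj: "inj_on h A" using assms(2) bij_betw_imp_inj_on by blast
  have sub: "\<And>x. x \<in> A \<Longrightarrow> orbit p x \<subseteq> A" using permutes_orbit_subset[OF assms(3)] by blast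
  have cardeq: "\<And>x. x \<in> A \<Longrightarrow> card (h ` orbit p x) = card (orbit p x)"
    using inj sub by (meson card_image inj_on_subset)
  have B: "B = h ` A" using assms(2) bij_betw_imp_surj_on by blast
  have "{orbit ?q y | y. y \<in> B \<and> card (orbit ?q y) = k}
        = image h ` {orbit p x | x. x \<in> A \<and> card (orbit p x) = k}"
  proof -
    have "{orbit ?q y | y. y \<in> B \<and> card (orbit ?q y) = k}
        = {orbit ?q (h x) | x. x \<in> A \<and> card (orbit ?q (h x)) = k}" using B by blast
    also have "\<dots> = {h ` orbit p x | x. x \<in> A \<and> card (h ` orbit p x) = k}"
      using conjp_orbit[OF assms] by (metis (no_types, lifting))
    also have "\<dots> = {h ` orbit p x | x. x \<in> A \<and> card (orbit p x) = k}"
      using cardeq by metis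
    also have "\<dots> = image h ` {orbit p x | x. x \<in> A \<and> card (orbit p x) = k}" by blast
    finally show ?thesis .
  qed
  moreover have "inj_on (image h) {orbit p x | x. x \<in> A \<and> card (orbit p x) = k}"
    by (rule inj_on_subset[OF inj_on_image_Pow[OF inj]]) (use sub in auto)
  ultimately show "cnt B ?q k = cnt A p k" unfolding cnt_def by (simp add: card_image)
qed

lemma Asum_bij:
  assumes "finite A" "bij_betw h A B"
  shows "Asum A f = Asum B f"
proof -
  have "Asum B f = (\<Sum>p\<in>{p. p permutes A}. f (cnt B (conjp h A B p)))"
    unfolding Asum_def by (rule sum.reindex_bij_betw[symmetric, OF bij_betw_permutations[OF assms(2)]])
  also have "\<dots> = Asum A f" unfolding Asum_def
    by (rule sum.cong) (use conjp_cnt[OF assms] in auto)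
  finally show ?thesis by simp
qed

lemma conjp_cyclic:
  assumes "bij_betw h A B" "c permutes A" "cyclic_on c A"
  shows "cyclic_on (conjp h A B c) B"
proof -
  have "cyclic_on (conjp h A B c) (h ` A)"
  proof (rule cyclic_on_image[OF assms(3)])
    fix x assume x: "x \<in> A"
    then have "h x \<in> B" "c x \<in> A" using assms(1,2) by (auto dest: bij_betwE simp: permutes_in_image)
    then show "conjp h A B c (h x) = h (c x)" using x assms(1)
      by (simp add: bij_betw_inv_into_left)
  qed
  then show ?thesis using assms(1) bij_betw_imp_surj_on by blast
qed

lemma bij_betw_cycs:
  assumes "bij_betw f A B"
  shows   "bij_betw (conjp f A B) (cycs A) (cycs B)"
proof -
  let ?g = "(\<lambda>\<pi> x. if x \<in> A then inv_into A f (\<pi> (f x)) else x)"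
  have bij_inv: "bij_betw (inv_into A f) B A" by (intro bij_betw_inv_into assms)
  have g_eq: "\<And>\<pi>. ?g \<pi> = conjp (inv_into A f) B A \<pi>"
    using assms by (simp add: inv_into_inv_into_eq cong: if_cong)
  show ?thesis unfolding cycs_def
  proof (rule bij_betw_byWitness [of _ ?g], goal_cases)
    case 3
    show ?case using permutes_bij_inv_into[OF _ assms] conjp_cyclic[OF assms] by auto
  next
    case 4
    show ?case using permutes_bij_inv_into[OF _ bij_inv] conjp_cyclic[OF bij_inv]
      by (auto simp: g_eq)
  next
    case 1
    thus ?case using assms
      by (force simp: fun_eq_iff permutes_not_in permutes_in_image bij_betw_inv_into_left
               dest: bij_betwE)
  next
    case 2
    thus ?case using assms bij_inv
      by (force simp: fun_eq_iff permutes_not_in permutes_in_image bij_betw_inv_into_right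
               dest: bij_betwE)
  qed
qed

lemma card_cycs_bij: "bij_betw f A B \<Longrightarrow> card (cycs A) = card (cycs B)"
  using bij_betw_cycs bij_betw_same_card by blast

lemma perm_restrict_orbit_cycs:
  assumes "p permutes S" "finite S" "b \<in> S"
  shows "perm_restrict p (orbit p b) \<in> cycs (orbit p b)"
proof -
  let ?T = "orbit p b"
  have cyc: "cyclic_on p ?T" using cyclic_on_orbit[OF assms(1,2)] .
  have sub: "?T \<subseteq> S" using permutes_orbit_subset[OF assms(1,3)] .
  have fin: "finite ?T" using sub assms(2) finite_subset by blast
  have inj: "inj_on p ?T" using permutes_inj_on[OF assms(1)] .
  have img: "p ` ?T \<subseteq> ?T" using cyclic_on_inI[OF cyc] by blast
  have "p ` ?T = ?T" using endo_inj_surj[OF fin img inj] .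
  then have "bij_betw p ?T ?T" using inj by (simp add: bij_betw_def)
  then have "bij_betw (perm_restrict p ?T) ?T ?T"
    by (rule bij_betw_cong[THEN iffD1, rotated]) (simp add: perm_restrict_simps)
  then have "perm_restrict p ?T permutes ?T"
    by (rule bij_imp_permutes) (simp add: perm_restrict_simps)
  moreover have "cyclic_on (perm_restrict p ?T) ?T"
    using cyc cyclic_on_perm_restrict by blast
  ultimately show ?thesis by (simp add: cycs_def)
qed

lemma cnt_decomp:
  assumes "p permutes S" "finite S" "b \<in> S"
  defines "T \<equiv> orbit p b"
  shows "cnt S p = shf (card T) (cnt (S - T) (perm_restrict p (S - T)))"
proof
  fix k
  let ?q = "perm_restrict p (S - T)"
  have cyc: "cyclic_on p T" unfolding T_def using cyclic_on_orbit[OF assms(1,2)] .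
  have sub: "T \<subseteq> S" unfolding T_def using permutes_orbit_subset[OF assms(1,3)] .
  have bT: "b \<in> T" unfolding T_def
    by (rule permutation_self_in_orbit[OF permutes_imp_permutation[OF assms(2,1)]])
  have qperm: "?q permutes S - T" using perm_restrict_diff_cyclic[OF assms(1) cyc] .
  have oT: "\<And>x. x \<in> T \<Longrightarrow> orbit p x = T" using orbit_cyclic_eq3[OF cyc] .
  have oq: "\<And>x. x \<in> S - T \<Longrightarrow> orbit p x = orbit ?q x"
  proof -
    fix x assume x: "x \<in> S - T"
    have "orbit ?q x = orbit p x"
    proof (rule orbit_cong0[OF x])
      show "?q \<in> S - T \<rightarrow> S - T" by (rule Pi_I) (use permutes_in_image[OF qperm] in blast)
      fix y assume "y \<in> S - T" then show "?q y = p y" by (simp add: perm_restrict_simps)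
    qed
    then show "orbit p x = orbit ?q x" by simp
  qed
  have oqsub: "\<And>x. x \<in> S - T \<Longrightarrow> orbit ?q x \<subseteq> S - T" using permutes_orbit_subset[OF qperm] by blast
  let ?B = "{orbit ?q x | x. x \<in> S - T \<and> card (orbit ?q x) = k}"
  have eq: "{orbit p x | x. x \<in> S \<and> card (orbit p x) = k} = (if card T = k then insert T ?B else ?B)"
  proof -
    have "{orbit p x | x. x \<in> S \<and> card (orbit p x) = k}
       = {orbit p x | x. x \<in> T \<and> card (orbit p x) = k} \<union> {orbit p x | x. x \<in> S - T \<and> card (orbit p x) = k}"
      using sub by blast
    also have "{orbit p x | x. x \<in> T \<and> card (orbit p x) = k} = (if card T = k then {T} else {})"
      using oT bT by auto
    also have "{orbit p x | x. x \<in> S - T \<and> card (orbit p x) = k} = ?B"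
      using oq by (metis (no_types, lifting))
    finally show ?thesis by auto
  qed
  have TB: "T \<notin> ?B"
  proof
    assume "T \<in> ?B"
    then obtain x where "x \<in> S - T" "T = orbit ?q x" by blast
    then show False using oqsub bT by blast
  qed
  have finB: "finite ?B"
  proof -
    have "?B \<subseteq> (\<lambda>x. orbit ?q x) ` (S - T)" by blast
    then show ?thesis using assms(2) finite_subset by blast
  qed
  have cq: "cnt (S - T) ?q k = card ?B" unfolding cnt_def ..
  show "cnt S p k = shf (card T) (cnt (S - T) ?q) k"
  proof (cases "card T = k")
    case True
    then have "cnt S p k = card (insert T ?B)" unfolding cnt_def eq by simp
    also have "\<dots> = Suc (card ?B)" by (rule card_insert_disjoint[OF finB TB])
    finally show ?thesis using True cq unfolding shf_def by simp
  next
    case False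
    then have "cnt S p k = card ?B" unfolding cnt_def eq by simp
    then show ?thesis using False cq unfolding shf_def by simp
  qed
qed

lemma glue_props:
  assumes "finite S" "b \<in> T" "T \<subseteq> S" "c \<in> cycs T" "q permutes S - T"
  defines "g \<equiv> q \<circ> c"
  shows "g permutes S" "orbit g b = T" "perm_restrict g T = c" "perm_restrict g (S - T) = q"
proof -
  have cp: "c permutes T" and cc: "cyclic_on c T" using assms(4) by (auto simp: cycs_def)
  have cS: "c permutes S" using permutes_subset[OF cp assms(3)] .
  have qS: "q permutes S" using permutes_subset[OF assms(5)] by blast
  show "g permutes S" unfolding g_def using permutes_compose[OF cS qS] .
  have gT: "\<And>x. x \<in> T \<Longrightarrow> g x = c x"
  proof -
    fix x assume x: "x \<in> T"
    then have "c x \<in> T" using permutes_in_image[OF cp] by simp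
    then show "g x = c x" unfolding g_def using permutes_not_in[OF assms(5)] by simp
  qed
  have gST: "\<And>x. x \<notin> T \<Longrightarrow> g x = q x"
    unfolding g_def using permutes_not_in[OF cp] by simp
  have "orbit g b = orbit c b"
    by (rule orbit_cong0[OF assms(2)]) (use gT permutes_in_image[OF cp] in auto)
  also have "\<dots> = T" using orbit_cyclic_eq3[OF cc assms(2)] .
  finally show "orbit g b = T" .
  show "perm_restrict g T = c"
    by (auto simp: fun_eq_iff perm_restrict_def gT permutes_not_in[OF cp])
  show "perm_restrict g (S - T) = q"
    using permutes_not_in[OF assms(5)] by (auto simp: fun_eq_iff perm_restrict_def gST)
qed

lemma Asum_decomp:
  assumes "finite S" "b \<in> S"
  shows "Asum S f = (\<Sum>T\<in>{T. b \<in> T \<and> T \<subseteq> S}.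
            of_nat (card (cycs T)) * Asum (S - T) (\<lambda>X. f (shf (card T) X)))"
proof -
  let ?I = "Sigma {T. b \<in> T \<and> T \<subseteq> S} (\<lambda>T. cycs T \<times> {q. q permutes S - T})"
  let ?h = "\<lambda>(T, c, q). f (shf (card T) (cnt (S - T) q))"
  have finTs: "finite {T. b \<in> T \<and> T \<subseteq> S}"
    by (rule finite_subset[of _ "Pow S"]) (use assms(1) in auto)
  have fincycs: "\<And>T. T \<subseteq> S \<Longrightarrow> finite (cycs T)"
  proof -
    fix T assume "T \<subseteq> S"
    then have "finite T" using assms(1) finite_subset by blast
    then show "finite (cycs T)" unfolding cycs_def
      by (rule finite_subset[rotated, OF finite_permutations]) auto
  qed
  have finq: "\<And>T. finite {q. q permutes S - T}" using assms(1) by (simp add: finite_permutations)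
  have "(\<Sum>T\<in>{T. b \<in> T \<and> T \<subseteq> S}. of_nat (card (cycs T)) * Asum (S - T) (\<lambda>X. f (shf (card T) X)))
      = (\<Sum>T\<in>{T. b \<in> T \<and> T \<subseteq> S}. \<Sum>cq\<in>cycs T \<times> {q. q permutes S - T}. ?h (T, cq))"
  proof (rule sum.cong[OF refl])
    fix T assume "T \<in> {T. b \<in> T \<and> T \<subseteq> S}"
    show "of_nat (card (cycs T)) * Asum (S - T) (\<lambda>X. f (shf (card T) X))
        = (\<Sum>cq\<in>cycs T \<times> {q. q permutes S - T}. ?h (T, cq))"
    proof -
      have "(\<Sum>cq\<in>cycs T \<times> {q. q permutes S - T}. ?h (T, cq))
          = (\<Sum>c\<in>cycs T. \<Sum>q\<in>{q. q permutes S - T}. f (shf (card T) (cnt (S - T) q)))"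
        using sum.cartesian_product[of "\<lambda>c q. f (shf (card T) (cnt (S - T) q))" "{q. q permutes S - T}" "cycs T"]
        by simp
      then show ?thesis unfolding Asum_def by simp
    qed
  qed
  also have "\<dots> = (\<Sum>(T, cq)\<in>?I. ?h (T, cq))"
    by (rule sum.Sigma) (use finTs fincycs finq in auto)
  also have "\<dots> = (\<Sum>x\<in>?I. ?h x)" by (simp only: case_prod_eta)
  also have "\<dots> = (\<Sum>p\<in>{p. p permutes S}. f (cnt S p))"
  proof (rule sum.reindex_bij_witness[where j = "\<lambda>(T, c, q). q \<circ> c"
       and i = "\<lambda>p. (orbit p b, perm_restrict p (orbit p b), perm_restrict p (S - orbit p b))"])
    fix x assume "x \<in> ?I"
    then obtain T c q where x: "x = (T, c, q)" "b \<in> T" "T \<subseteq> S" "c \<in> cycs T" "q permutes S - T"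
      by auto
    note gp = glue_props[OF assms(1) x(2-5)]
    show "(case x of (T, c, q) \<Rightarrow> q \<circ> c) \<in> {p. p permutes S}" using gp x by simp
    show "(orbit (case x of (T, c, q) \<Rightarrow> q \<circ> c) b,
           perm_restrict (case x of (T, c, q) \<Rightarrow> q \<circ> c) (orbit (case x of (T, c, q) \<Rightarrow> q \<circ> c) b),
           perm_restrict (case x of (T, c, q) \<Rightarrow> q \<circ> c) (S - orbit (case x of (T, c, q) \<Rightarrow> q \<circ> c) b)) = x"
      using gp x by simp
    show "f (cnt S (case x of (T, c, q) \<Rightarrow> q \<circ> c)) = ?h x"
      using cnt_decomp[OF gp(1) assms] gp x by simp
  next
    fix p assume "p \<in> {p. p permutes S}"
    then have p: "p permutes S" by simp
    have cyc: "cyclic_on p (orbit p b)" using cyclic_on_orbit[OF p assms(1)] .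
    have sub: "orbit p b \<subseteq> S" using permutes_orbit_subset[OF p assms(2)] .
    have bT: "b \<in> orbit p b"
      by (rule permutation_self_in_orbit[OF permutes_imp_permutation[OF assms(1) p]])
    show "(orbit p b, perm_restrict p (orbit p b), perm_restrict p (S - orbit p b)) \<in> ?I"
      using perm_restrict_orbit_cycs[OF p assms] perm_restrict_diff_cyclic[OF p cyc] sub bT by auto
    have e1: "perm_restrict p (S - orbit p b) \<circ> perm_restrict p (orbit p b) = perm_restrict p ((S - orbit p b) \<union> orbit p b)"
      by (rule perm_restrict_comp[OF _ cyc]) auto
    have e2: "(S - orbit p b) \<union> orbit p b = S" using sub by blast
    have "perm_restrict p (S - orbit p b) \<circ> perm_restrict p (orbit p b) = p"
      using e1 unfolding e2 perm_restrict_id[OF p] .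
    then show "(case (orbit p b, perm_restrict p (orbit p b), perm_restrict p (S - orbit p b)) of
          (T, c, q) \<Rightarrow> q \<circ> c) = p" by simp
  qed
  finally show ?thesis unfolding Asum_def by simp
qed

lemma Asum_card: "finite S \<Longrightarrow> Asum S f = Asum {..<card S} f"
  using finite_same_card_bij[of S "{..<card S}"] Asum_bij by fastforce

lemma cycs_card: "finite S \<Longrightarrow> card (cycs S) = card (cycs {..<card S})"
  using finite_same_card_bij[of S "{..<card S}"] card_cycs_bij by fastforce

lemma sum_pow_card:
  assumes "finite A"
  shows "(\<Sum>U\<in>Pow A. G (card U)) = (\<Sum>j\<le>card A. of_nat (card A choose j) * (G j :: complex))"
proof -
  have "(\<Sum>U\<in>Pow A. G (card U)) = (\<Sum>j\<le>card A. \<Sum>U\<in>{U. U \<in> Pow A \<and> card U = j}. G (card U))"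
    by (rule sum.group[symmetric]) (use assms card_mono in auto)
  also have "\<dots> = (\<Sum>j\<le>card A. of_nat (card A choose j) * G j)"
  proof (rule sum.cong[OF refl])
    fix j
    have "(\<Sum>U\<in>{U. U \<in> Pow A \<and> card U = j}. G (card U)) = (\<Sum>U\<in>{U. U \<subseteq> A \<and> card U = j}. G j)"
      by (rule sum.cong) auto
    also have "\<dots> = of_nat (card A choose j) * G j" using n_subsets[OF assms, of j] by simp
    finally show "(\<Sum>U\<in>{U. U \<in> Pow A \<and> card U = j}. G (card U)) = of_nat (card A choose j) * G j" .
  qed
  finally show ?thesis .
qed

lemma sum_T_card:
  assumes "finite S" "b \<in> S"
  shows "(\<Sum>T\<in>{T. b \<in> T \<and> T \<subseteq> S}. G (card T))
       = (\<Sum>j\<le>card S - 1. of_nat (card S - 1 choose j) * (G (Suc j) :: complex))"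
proof -
  let ?A = "S - {b}"
  have finA: "finite ?A" using assms by simp
  have img: "{T. b \<in> T \<and> T \<subseteq> S} = insert b ` Pow ?A"
  proof
    show "{T. b \<in> T \<and> T \<subseteq> S} \<subseteq> insert b ` Pow ?A"
    proof
      fix T assume "T \<in> {T. b \<in> T \<and> T \<subseteq> S}"
      then have "T = insert b (T - {b})" "T - {b} \<in> Pow ?A" by auto
      then show "T \<in> insert b ` Pow ?A" by blast
    qed
  qed (use assms in auto)
  have inj: "inj_on (insert b) (Pow ?A)"
    by (rule inj_onI) (metis Diff_insert_absorb PowD subset_Diff_insert)
  have "(\<Sum>T\<in>{T. b \<in> T \<and> T \<subseteq> S}. G (card T)) = (\<Sum>U\<in>Pow ?A. G (card (insert b U)))"
    unfolding img by (simp add: sum.reindex[OF inj])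
  also have "\<dots> = (\<Sum>U\<in>Pow ?A. G (Suc (card U)))"
  proof (rule sum.cong[OF refl])
    fix U assume "U \<in> Pow ?A"
    then have "finite U" "b \<notin> U" using finA finite_subset by auto
    then show "G (card (insert b U)) = G (Suc (card U))" by simp
  qed
  also have "\<dots> = (\<Sum>j\<le>card ?A. of_nat (card ?A choose j) * G (Suc j))"
    by (rule sum_pow_card[OF finA])
  also have "card ?A = card S - 1" using assms by simp
  finally show ?thesis .
qed

definition cyc :: "nat \<Rightarrow> nat" where "cyc L = card (cycs {..<L})"

lemma Asum_rec0:
  "Asum {..<Suc n} f = (\<Sum>j\<le>n. of_nat (n choose j) * (of_nat (cyc (Suc j)) *
        Asum {..<n - j} (\<lambda>X. f (shf (Suc j) X))))"
proof -
  let ?S = "{..<Suc n}"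
  have "Asum ?S f = (\<Sum>T\<in>{T. n \<in> T \<and> T \<subseteq> ?S}.
            of_nat (card (cycs T)) * Asum (?S - T) (\<lambda>X. f (shf (card T) X)))"
    by (rule Asum_decomp) auto
  also have "\<dots> = (\<Sum>T\<in>{T. n \<in> T \<and> T \<subseteq> ?S}.
            of_nat (cyc (card T)) * Asum {..<Suc n - card T} (\<lambda>X. f (shf (card T) X)))"
  proof (rule sum.cong[OF refl])
    fix T assume T: "T \<in> {T. n \<in> T \<and> T \<subseteq> ?S}"
    then have fT: "finite T" using finite_subset by blast
    have "card (?S - T) = Suc n - card T" using T fT by (simp add: card_Diff_subset)
    then show "of_nat (card (cycs T)) * Asum (?S - T) (\<lambda>X. f (shf (card T) X))
       = of_nat (cyc (card T)) * Asum {..<Suc n - card T} (\<lambda>X. f (shf (card T) X))"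
      using Asum_card[of "?S - T"] cycs_card[OF fT] by (simp add: cyc_def)
  qed
  also have "\<dots> = (\<Sum>j\<le>n. of_nat (n choose j) * (of_nat (cyc (Suc j)) *
        Asum {..<n - j} (\<lambda>X. f (shf (Suc j) X))))"
    using sum_T_card[of ?S n "\<lambda>L. of_nat (cyc L) * Asum {..<Suc n - L} (\<lambda>X. f (shf L X))"] by simp
  finally show ?thesis .
qed

lemma Asum_one: "finite S \<Longrightarrow> Asum S (\<lambda>_. 1) = of_nat (fact (card S))"
proof -
  assume "finite S"
  then have "card {p. p permutes S} = fact (card S)" using card_permutations[OF refl] by blast
  then show ?thesis unfolding Asum_def by simp
qed

lemma Asum_one': "Asum {..<m} (\<lambda>_. 1) = of_nat (fact m)"
  using Asum_one[of "{..<m}"] by simp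

lemma binom_fact_c: "j \<le> n \<Longrightarrow>
   (of_nat (n choose j) * (of_nat (fact j) * of_nat (fact (n - j))) :: complex) = of_nat (fact n)"
proof -
  assume j: "j \<le> n"
  have "fact j * fact (n - j) * (n choose j) = (fact n :: nat)" by (rule binomial_fact_lemma[OF j])
  then have "(of_nat (fact j * fact (n - j) * (n choose j)) :: complex) = of_nat (fact n)" by simp
  then show ?thesis by (simp only: of_nat_mult mult_ac)
qed

lemma cyc_fact: "cyc (Suc n) = fact n"
proof (induction n rule: less_induct)
  case (less n)
  have "Asum {..<Suc n} (\<lambda>_. 1) = (\<Sum>j\<le>n. of_nat (n choose j) * (of_nat (cyc (Suc j)) *
        Asum {..<n - j} (\<lambda>_. 1)))"
    by (rule Asum_rec0)
  then have "(of_nat (fact (Suc n)) :: complex) = (\<Sum>j\<le>n. of_nat (n choose j) * (of_nat (cyc (Suc j)) *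
        of_nat (fact (n - j))))"
    unfolding Asum_one' .
  also have "\<dots> = (\<Sum>j<n. of_nat (fact n)) + of_nat (cyc (Suc n))"
  proof -
    have "(\<Sum>j<n. of_nat (n choose j) * (of_nat (cyc (Suc j)) * of_nat (fact (n - j))))
        = (\<Sum>j<n. (of_nat (fact n) :: complex))"
    proof (rule sum.cong[OF refl])
      fix j assume "j \<in> {..<n}"
      then have j: "j < n" by simp
      show "(of_nat (n choose j) * (of_nat (cyc (Suc j)) * of_nat (fact (n - j))) :: complex) = of_nat (fact n)"
        unfolding less[OF j] using binom_fact_c[of j n] j by simp
    qed
    moreover have "(\<Sum>j\<le>n. of_nat (n choose j) * (of_nat (cyc (Suc j)) * of_nat (fact (n - j))))
      = (\<Sum>j<n. of_nat (n choose j) * (of_nat (cyc (Suc j)) * of_nat (fact (n - j))))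
        + (of_nat (cyc (Suc n)) :: complex)"
      by (simp add: lessThan_Suc_atMost[symmetric])
    ultimately show ?thesis by simp
  qed
  finally have "(of_nat (fact (Suc n)) :: complex) = of_nat n * of_nat (fact n) + of_nat (cyc (Suc n))"
    by simp
  then have "(of_nat (cyc (Suc n)) :: complex) = of_nat (fact n)" by (simp add: algebra_simps)
  then show ?case using of_nat_eq_iff by blast
qed

definition aa :: "nat \<Rightarrow> ((nat \<Rightarrow> nat) \<Rightarrow> complex) \<Rightarrow> complex" where
  "aa n f = Asum {..<n} f / of_nat (fact n)"

lemma aa_rec: "of_nat (Suc n) * aa (Suc n) f = (\<Sum>j\<le>n. aa (n - j) (\<lambda>X. f (shf (Suc j) X)))"
proof -
  have "Asum {..<Suc n} f = (\<Sum>j\<le>n. of_nat (fact n) * aa (n - j) (\<lambda>X. f (shf (Suc j) X)))"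
    unfolding Asum_rec0
  proof (rule sum.cong[OF refl])
    fix j assume "j \<in> {..n}"
    then have j: "j \<le> n" by simp
    have nz: "(of_nat (fact (n - j)) :: complex) \<noteq> 0" by simp
    show "of_nat (n choose j) * (of_nat (cyc (Suc j)) * Asum {..<n - j} (\<lambda>X. f (shf (Suc j) X)))
       = of_nat (fact n) * aa (n - j) (\<lambda>X. f (shf (Suc j) X))"
      unfolding aa_def cyc_fact binom_fact_c[OF j, symmetric] using nz by (simp add: field_simps)
  qed
  also have "\<dots> = of_nat (fact n) * (\<Sum>j\<le>n. aa (n - j) (\<lambda>X. f (shf (Suc j) X)))"
    by (simp add: sum_distrib_left)
  finally have "Asum {..<Suc n} f = of_nat (fact n) * (\<Sum>j\<le>n. aa (n - j) (\<lambda>X. f (shf (Suc j) X)))" .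
  moreover have "of_nat (Suc n) * aa (Suc n) f = Asum {..<Suc n} f / of_nat (fact n)"
  proof -
    have e: "(of_nat (fact (Suc n)) :: complex) = of_nat (Suc n) * of_nat (fact n)"
      by (simp only: fact_Suc of_nat_mult of_nat_id)
    have nz: "(of_nat (Suc n) :: complex) \<noteq> 0" by (simp only: of_nat_eq_0_iff)
    have "of_nat (Suc n) * aa (Suc n) f = (of_nat (Suc n) * Asum {..<Suc n} f) / (of_nat (Suc n) * of_nat (fact n))"
      unfolding aa_def e by (rule times_divide_eq_right)
    also have "\<dots> = Asum {..<Suc n} f / of_nat (fact n)"
      by (rule nonzero_mult_divide_mult_cancel_left[OF nz])
    finally show ?thesis .
  qed
  ultimately show ?thesis by simp
qed

lemma aa_add: "aa n (\<lambda>X. g X + h X) = aa n g + aa n h"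
  unfolding aa_def Asum_def by (simp add: sum.distrib add_divide_distrib)

lemma aa_zero: "aa n (\<lambda>X. 0) = 0"
  unfolding aa_def Asum_def by simp

lemma telescope: "(\<Sum>j\<le>m. F (Suc (m - j)) - F (m - j)) = F (Suc m) - (F 0 :: complex)"
proof (induction m)
  case 0 then show ?case by simp
next
  case (Suc m)
  have "(\<Sum>j\<le>Suc m. F (Suc (Suc m - j)) - F (Suc m - j))
      = (F (Suc (Suc m)) - F (Suc m)) + (\<Sum>j\<le>m. F (Suc (Suc m - Suc j)) - F (Suc m - Suc j))"
    by (subst sum.atMost_Suc_shift) simp
  also have "(\<Sum>j\<le>m. F (Suc (Suc m - Suc j)) - F (Suc m - Suc j)) = F (Suc m) - F 0"
    using Suc by simp
  finally show ?case by simp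
qed

lemma aa_stable: "pdeg d f \<Longrightarrow> d \<le> n \<Longrightarrow> aa (Suc n) f = aa n f"
proof (induction arbitrary: n rule: pdeg.induct)
  case (pdegI d f)
  note IH = pdegI.IH and inv = pdegI.hyps(2)
  show ?case
  proof (cases n)
    case 0
    then have d0: "d = 0" using pdegI.prems by simp
    have "of_nat (Suc 0) * aa (Suc 0) f = (\<Sum>j\<le>0. aa (0 - j) (\<lambda>X. f (shf (Suc j) X)))"
      by (rule aa_rec)
    also have "\<dots> = aa 0 f" using inv[of "Suc 0"] d0 by simp
    finally show ?thesis using 0 by simp
  next
    case (Suc m)
    define D where "D j = (\<lambda>X. f (shf (Suc j) X) - f X)" for j
    have fsplit: "\<And>k j. aa k (\<lambda>X. f (shf (Suc j) X)) = aa k f + aa k (D j)"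
    proof -
      fix k j
      have "(\<lambda>X. f (shf (Suc j) X)) = (\<lambda>X. f X + D j X)" by (simp add: D_def)
      then show "aa k (\<lambda>X. f (shf (Suc j) X)) = aa k f + aa k (D j)" by (simp add: aa_add)
    qed
    have claim: "\<And>j. j \<le> m \<Longrightarrow> aa (Suc (m - j)) (D j) = aa (m - j) (D j)"
    proof -
      fix j assume j: "j \<le> m"
      show "aa (Suc (m - j)) (D j) = aa (m - j) (D j)"
      proof (cases "Suc j \<le> d")
        case True
        have "d - Suc j \<le> m - j" using pdegI.prems Suc by simp
        then show ?thesis unfolding D_def using IH[of "Suc j"] True by simp
      next
        case False
        then have "D j = (\<lambda>X. 0)" unfolding D_def using inv by (simp add: fun_eq_iff)
        then show ?thesis by (simp add: aa_zero)
      qed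
    qed
    have "of_nat (Suc (Suc m)) * aa (Suc (Suc m)) f
        = (\<Sum>j\<le>Suc m. aa (Suc m - j) (\<lambda>X. f (shf (Suc j) X)))" by (rule aa_rec)
    also have "\<dots> = (\<Sum>j\<le>m. aa (Suc m - j) (\<lambda>X. f (shf (Suc j) X))) + aa 0 (\<lambda>X. f (shf (Suc (Suc m)) X))"
      by simp
    also have "aa 0 (\<lambda>X. f (shf (Suc (Suc m)) X)) = aa 0 f"
    proof -
      have "d < Suc (Suc m)" using pdegI.prems Suc by simp
      then have "(\<lambda>X. f (shf (Suc (Suc m)) X)) = f" using inv by (simp add: fun_eq_iff)
      then show ?thesis by simp
    qed
    also have "(\<Sum>j\<le>m. aa (Suc m - j) (\<lambda>X. f (shf (Suc j) X)))
        = (\<Sum>j\<le>m. aa (Suc (m - j)) f - aa (m - j) f) + (\<Sum>j\<le>m. aa (m - j) (\<lambda>X. f (shf (Suc j) X)))"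
      unfolding sum.distrib[symmetric]
    proof (rule sum.cong[OF refl])
      fix j assume "j \<in> {..m}"
      then have j: "j \<le> m" by simp
      then have e: "Suc m - j = Suc (m - j)" by simp
      show "aa (Suc m - j) (\<lambda>X. f (shf (Suc j) X)) = aa (Suc (m - j)) f - aa (m - j) f + aa (m - j) (\<lambda>X. f (shf (Suc j) X))"
        unfolding e fsplit claim[OF j] by simp
    qed
    also have "(\<Sum>j\<le>m. aa (Suc (m - j)) f - aa (m - j) f) = aa (Suc m) f - aa 0 f"
      by (rule telescope)
    also have "(\<Sum>j\<le>m. aa (m - j) (\<lambda>X. f (shf (Suc j) X))) = of_nat (Suc m) * aa (Suc m) f"
      by (rule aa_rec[symmetric])
    finally have "of_nat (Suc (Suc m)) * aa (Suc (Suc m)) f = of_nat (Suc (Suc m)) * aa (Suc m) f"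
      by (simp add: algebra_simps)
    then show ?thesis using Suc by (simp del: of_nat_Suc)
  qed
qed

lemma aa_const: assumes "pdeg d f" "d \<le> n" shows "aa n f = aa d f"
  using assms(2)
proof (induction n rule: dec_induct)
  case base then show ?case by simp
next
  case (step n) then show ?case using aa_stable[OF assms(1), of n] by simp
qed

lemma aa_indep: "pdeg d f \<Longrightarrow> d \<le> n \<Longrightarrow> d \<le> n' \<Longrightarrow> aa n f = aa n' f"
  using aa_const by metis

lemma num_cycles_cnt: "(\<lambda>k. num_cycles p n k) = cnt {..<n} p"
  by (simp add: fun_eq_iff num_cycles_def cnt_def)

lemma Sn_prod:
  "(\<Sum>\<sigma>\<in>Sn m n. \<Prod>i<m. F i (\<sigma> i)) = (\<Prod>i<m. \<Sum>p\<in>{p. p permutes {..<n i}}. (F i p :: complex))"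
proof (induction m)
  case 0
  have "Sn 0 n = {\<lambda>_. id}" by (auto simp: Sn_def)
  then show ?case by simp
next
  case (Suc m)
  have "(\<Sum>\<sigma>\<in>Sn (Suc m) n. \<Prod>i<Suc m. F i (\<sigma> i))
      = (\<Sum>x\<in>Sn m n \<times> {p. p permutes {..<n m}}. (\<Prod>i<m. F i (fst x i)) * F m (snd x))"
  proof (rule sum.reindex_bij_witness[where j = "\<lambda>\<sigma>. (\<sigma>(m := id), \<sigma> m)" and i = "\<lambda>(\<tau>, p). \<tau>(m := p)"])
    fix x assume x: "x \<in> Sn m n \<times> {p. p permutes {..<n m}}"
    then obtain \<tau> p where xe: "x = (\<tau>, p)" and t: "\<tau> \<in> Sn m n" and p: "p permutes {..<n m}" by auto
    have tm: "\<tau> m = id" using t by (simp add: Sn_def)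
    show "(case x of (\<tau>, p) \<Rightarrow> \<tau>(m := p)) \<in> Sn (Suc m) n"
      using t p by (auto simp: Sn_def xe less_Suc_eq)
    show "((case x of (\<tau>, p) \<Rightarrow> \<tau>(m := p))(m := id), (case x of (\<tau>, p) \<Rightarrow> \<tau>(m := p)) m) = x"
      using tm by (auto simp: xe fun_eq_iff)
  next
    fix \<sigma> assume s: "\<sigma> \<in> Sn (Suc m) n"
    show "(\<sigma>(m := id), \<sigma> m) \<in> Sn m n \<times> {p. p permutes {..<n m}}"
      using s by (auto simp: Sn_def)
    show "(case (\<sigma>(m := id), \<sigma> m) of (\<tau>, p) \<Rightarrow> \<tau>(m := p)) = \<sigma>" by simp
    show "(\<Prod>i<m. F i (fst (\<sigma>(m := id), \<sigma> m) i)) * F m (snd (\<sigma>(m := id), \<sigma> m)) = (\<Prod>i<Suc m. F i (\<sigma> i))"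
      by simp
  qed
  also have "\<dots> = (\<Sum>\<tau>\<in>Sn m n. \<Sum>p\<in>{p. p permutes {..<n m}}. (\<Prod>i<m. F i (\<tau> i)) * F m p)"
    by (simp add: sum.cartesian_product case_prod_beta')
  also have "\<dots> = (\<Sum>\<tau>\<in>Sn m n. \<Prod>i<m. F i (\<tau> i)) * (\<Sum>p\<in>{p. p permutes {..<n m}}. F m p)"
    by (simp add: sum_product)
  also have "\<dots> = (\<Prod>i<Suc m. \<Sum>p\<in>{p. p permutes {..<n i}}. F i p)"
    using Suc by simp
  finally show ?case .
qed

lemma card_Sn: "(of_nat (card (Sn m n)) :: complex) = (\<Prod>i<m. of_nat (fact (n i)))"
proof -
  have "(of_nat (card (Sn m n)) :: complex) = (\<Sum>\<sigma>\<in>Sn m n. \<Prod>i<m. (\<lambda>i p. (1::complex)) i (\<sigma> i))"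
    by simp
  also have "\<dots> = (\<Prod>i<m. \<Sum>p\<in>{p. p permutes {..<n i}}. (1::complex))" by (rule Sn_prod)
  also have "\<dots> = (\<Prod>i<m. of_nat (fact (n i)))"
    using card_permutations[OF refl, of "{..<n i}" for i] by simp
  finally show ?thesis .
qed

definition Mv :: "((nat \<times> nat) \<Rightarrow>\<^sub>0 nat) \<Rightarrow> (nat \<Rightarrow> nat) \<Rightarrow> (nat \<Rightarrow> nat \<Rightarrow> nat) \<Rightarrow> complex" where
  "Mv mo n \<sigma> = (\<Prod>v\<in>Poly_Mapping.keys mo. of_nat (num_cycles (\<sigma> (fst v)) (n (fst v)) (snd v)) ^ Poly_Mapping.lookup mo v)"

definition Mi :: "((nat \<times> nat) \<Rightarrow>\<^sub>0 nat) \<Rightarrow> nat \<Rightarrow> (nat \<Rightarrow> nat) \<Rightarrow> complex" where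
  "Mi mo i X = (\<Prod>v\<in>{v \<in> Poly_Mapping.keys mo. fst v = i}. of_nat (X (snd v)) ^ Poly_Mapping.lookup mo v)"

lemma cnj_Mv: "cnj (Mv mo n \<sigma>) = Mv mo n \<sigma>"
  unfolding Mv_def by simp

lemma Mv_split:
  assumes "\<forall>v\<in>Poly_Mapping.keys mo. fst v < m"
  shows "Mv mo n \<sigma> = (\<Prod>i<m. Mi mo i (cnt {..<n i} (\<sigma> i)))"
proof -
  have "Mv mo n \<sigma> = (\<Prod>i<m. \<Prod>v\<in>{v \<in> Poly_Mapping.keys mo. fst v = i}.
          of_nat (num_cycles (\<sigma> (fst v)) (n (fst v)) (snd v)) ^ Poly_Mapping.lookup mo v)"
    unfolding Mv_def by (rule prod.group[symmetric]) (use assms in auto)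
  also have "\<dots> = (\<Prod>i<m. Mi mo i (cnt {..<n i} (\<sigma> i)))"
  proof (rule prod.cong[OF refl])
    fix i
    show "(\<Prod>v\<in>{v \<in> Poly_Mapping.keys mo. fst v = i}.
          of_nat (num_cycles (\<sigma> (fst v)) (n (fst v)) (snd v)) ^ Poly_Mapping.lookup mo v)
        = Mi mo i (cnt {..<n i} (\<sigma> i))"
      unfolding Mi_def num_cycles_cnt[symmetric] by (rule prod.cong) auto
  qed
  finally show ?thesis .
qed

lemma pdeg_Mi:
  assumes "\<forall>v\<in>Poly_Mapping.keys mo. 1 \<le> snd v"
  shows "pdeg (mono_deg mo i) (Mi mo i)"
proof -
  have "pdeg (\<Sum>v\<in>{v \<in> Poly_Mapping.keys mo. fst v = i}. snd v * Poly_Mapping.lookup mo v)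
          (\<lambda>X. \<Prod>v\<in>{v \<in> Poly_Mapping.keys mo. fst v = i}. of_nat (X (snd v)) ^ Poly_Mapping.lookup mo v)"
  proof (rule pdeg_prod)
    fix v assume v: "v \<in> {v \<in> Poly_Mapping.keys mo. fst v = i}"
    then have "1 \<le> snd v" using assms by auto
    from pdeg_power[OF pdeg_var[OF this], of "Poly_Mapping.lookup mo v"]
    show "pdeg (snd v * Poly_Mapping.lookup mo v) (\<lambda>X. of_nat (X (snd v)) ^ Poly_Mapping.lookup mo v)"
      by (simp add: mult.commute)
  qed simp
  then show ?thesis unfolding mono_deg_def Mi_def[abs_def] by simp
qed

lemma E_prod:
  assumes "\<forall>v\<in>Poly_Mapping.keys mo. fst v < m" "\<forall>v\<in>Poly_Mapping.keys mo'. fst v < m"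
  shows "(1 / of_nat (card (Sn m n))) * (\<Sum>\<sigma>\<in>Sn m n. Mv mo n \<sigma> * Mv mo' n \<sigma>)
       = (\<Prod>i<m. aa (n i) (\<lambda>X. Mi mo i X * Mi mo' i X))"
proof -
  have "(\<Sum>\<sigma>\<in>Sn m n. Mv mo n \<sigma> * Mv mo' n \<sigma>)
      = (\<Sum>\<sigma>\<in>Sn m n. \<Prod>i<m. (\<lambda>i p. Mi mo i (cnt {..<n i} p) * Mi mo' i (cnt {..<n i} p)) i (\<sigma> i))"
    unfolding Mv_split[OF assms(1)] Mv_split[OF assms(2)] by (simp add: prod.distrib)
  also have "\<dots> = (\<Prod>i<m. Asum {..<n i} (\<lambda>X. Mi mo i X * Mi mo' i X))"
    using Sn_prod[where F = "\<lambda>i p. Mi mo i (cnt {..<n i} p) * Mi mo' i (cnt {..<n i} p)"]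
    by (simp add: Asum_def)
  finally have "(1 / of_nat (card (Sn m n))) * (\<Sum>\<sigma>\<in>Sn m n. Mv mo n \<sigma> * Mv mo' n \<sigma>)
     = (\<Prod>i<m. Asum {..<n i} (\<lambda>X. Mi mo i X * Mi mo' i X)) / (\<Prod>i<m. of_nat (fact (n i)))"
    unfolding card_Sn by simp
  also have "\<dots> = (\<Prod>i<m. aa (n i) (\<lambda>X. Mi mo i X * Mi mo' i X))"
    unfolding aa_def by (rule prod_dividef[symmetric])
  finally show ?thesis .
qed

lemma inner_expand:
  "inner_S m n P Q = (\<Sum>mo\<in>Poly_Mapping.keys P. \<Sum>mo'\<in>Poly_Mapping.keys Q.
      Poly_Mapping.lookup P mo * cnj (Poly_Mapping.lookup Q mo') *
      ((1 / of_nat (card (Sn m n))) * (\<Sum>\<sigma>\<in>Sn m n. Mv mo n \<sigma> * Mv mo' n \<sigma>)))"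
proof -
  have ev: "\<And>\<sigma>. eval_cpoly P n \<sigma> * cnj (eval_cpoly Q n \<sigma>) = (\<Sum>mo\<in>Poly_Mapping.keys P. \<Sum>mo'\<in>Poly_Mapping.keys Q.
      (Poly_Mapping.lookup P mo * cnj (Poly_Mapping.lookup Q mo')) * (Mv mo n \<sigma> * Mv mo' n \<sigma>))"
  proof -
    fix \<sigma>
    have cq: "cnj (\<Sum>mo'\<in>Poly_Mapping.keys Q. Poly_Mapping.lookup Q mo' * Mv mo' n \<sigma>)
        = (\<Sum>mo'\<in>Poly_Mapping.keys Q. cnj (Poly_Mapping.lookup Q mo') * Mv mo' n \<sigma>)"
      by (simp add: cnj_Mv)
    show "eval_cpoly P n \<sigma> * cnj (eval_cpoly Q n \<sigma>) = (\<Sum>mo\<in>Poly_Mapping.keys P. \<Sum>mo'\<in>Poly_Mapping.keys Q.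
      (Poly_Mapping.lookup P mo * cnj (Poly_Mapping.lookup Q mo')) * (Mv mo n \<sigma> * Mv mo' n \<sigma>))"
      unfolding eval_cpoly_def Mv_def[symmetric] cq sum_product by (simp add: mult_ac)
  qed
  have "inner_S m n P Q = (1 / of_nat (card (Sn m n))) * (\<Sum>\<sigma>\<in>Sn m n. \<Sum>mo\<in>Poly_Mapping.keys P. \<Sum>mo'\<in>Poly_Mapping.keys Q.
      (Poly_Mapping.lookup P mo * cnj (Poly_Mapping.lookup Q mo')) * (Mv mo n \<sigma> * Mv mo' n \<sigma>))"
    unfolding inner_S_def ev ..
  also have "\<dots> = (1 / of_nat (card (Sn m n))) * (\<Sum>mo\<in>Poly_Mapping.keys P. \<Sum>mo'\<in>Poly_Mapping.keys Q.
      \<Sum>\<sigma>\<in>Sn m n. (Poly_Mapping.lookup P mo * cnj (Poly_Mapping.lookup Q mo')) * (Mv mo n \<sigma> * Mv mo' n \<sigma>))"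
    by (simp only: sum.swap[of _ "Sn m n"])
  also have "\<dots> = (\<Sum>mo\<in>Poly_Mapping.keys P. \<Sum>mo'\<in>Poly_Mapping.keys Q.
      Poly_Mapping.lookup P mo * cnj (Poly_Mapping.lookup Q mo') *
      ((1 / of_nat (card (Sn m n))) * (\<Sum>\<sigma>\<in>Sn m n. Mv mo n \<sigma> * Mv mo' n \<sigma>)))"
    by (simp add: sum_distrib_left mult_ac)
  finally show ?thesis .
qed

theorem mainTheorem20:
  fixes m :: nat and P Q :: cpoly and a b :: "nat \<Rightarrow> nat"
  assumes "m \<ge> 1"
    and "valid_cpoly m P" and "valid_cpoly m Q"
    and "\<forall>mo\<in>Poly_Mapping.keys P. \<forall>i<m. mono_deg mo i \<le> a i"
    and "\<forall>mo\<in>Poly_Mapping.keys Q. \<forall>i<m. mono_deg mo i \<le> b i"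
  shows "\<forall>n n'. (\<forall>i<m. a i + b i \<le> n i) \<and> (\<forall>i<m. a i + b i \<le> n' i)
           \<longrightarrow> inner_S m n P Q = inner_S m n' P Q"
proof (intro allI impI)
  fix n n' :: "nat \<Rightarrow> nat"
  assume nn: "(\<forall>i<m. a i + b i \<le> n i) \<and> (\<forall>i<m. a i + b i \<le> n' i)"
  have key: "(1 / of_nat (card (Sn m n))) * (\<Sum>\<sigma>\<in>Sn m n. Mv mo n \<sigma> * Mv mo' n \<sigma>)
       = (1 / of_nat (card (Sn m n'))) * (\<Sum>\<sigma>\<in>Sn m n'. Mv mo n' \<sigma> * Mv mo' n' \<sigma>)"
    if mo: "mo \<in> Poly_Mapping.keys P" and mo': "mo' \<in> Poly_Mapping.keys Q" for mo mo'
  proof -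
    have v1: "\<forall>v\<in>Poly_Mapping.keys mo. fst v < m" "\<forall>v\<in>Poly_Mapping.keys mo. 1 \<le> snd v"
      using assms(2) mo by (auto simp: valid_cpoly_def)
    have v2: "\<forall>v\<in>Poly_Mapping.keys mo'. fst v < m" "\<forall>v\<in>Poly_Mapping.keys mo'. 1 \<le> snd v"
      using assms(3) mo' by (auto simp: valid_cpoly_def)
    have "(\<Prod>i<m. aa (n i) (\<lambda>X. Mi mo i X * Mi mo' i X)) = (\<Prod>i<m. aa (n' i) (\<lambda>X. Mi mo i X * Mi mo' i X))"
    proof (rule prod.cong[OF refl])
      fix i assume "i \<in> {..<m}"
      then have i: "i < m" by simp
      have pd: "pdeg (mono_deg mo i + mono_deg mo' i) (\<lambda>X. Mi mo i X * Mi mo' i X)"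
        by (rule pdeg_mult[OF pdeg_Mi[OF v1(2)] pdeg_Mi[OF v2(2)]])
      have le: "mono_deg mo i + mono_deg mo' i \<le> a i + b i"
        using assms(4) assms(5) mo mo' i by (simp add: add_mono)
      have pd2: "pdeg (a i + b i) (\<lambda>X. Mi mo i X * Mi mo' i X)" by (rule pdeg_mono[OF pd le])
      show "aa (n i) (\<lambda>X. Mi mo i X * Mi mo' i X) = aa (n' i) (\<lambda>X. Mi mo i X * Mi mo' i X)"
        by (rule aa_indep[OF pd2]) (use nn i in auto)
    qed
    then show ?thesis unfolding E_prod[OF v1(1) v2(1)] .
  qed
  show "inner_S m n P Q = inner_S m n' P Q"
    unfolding inner_expand
  proof (rule sum.cong[OF refl], rule sum.cong[OF refl])
    fix mo mo' assume "mo \<in> Poly_Mapping.keys P" "mo' \<in> Poly_Mapping.keys Q"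
    then show "Poly_Mapping.lookup P mo * cnj (Poly_Mapping.lookup Q mo') *
      ((1 / of_nat (card (Sn m n))) * (\<Sum>\<sigma>\<in>Sn m n. Mv mo n \<sigma> * Mv mo' n \<sigma>))
      = Poly_Mapping.lookup P mo * cnj (Poly_Mapping.lookup Q mo') *
      ((1 / of_nat (card (Sn m n'))) * (\<Sum>\<sigma>\<in>Sn m n'. Mv mo n' \<sigma> * Mv mo' n' \<sigma>))"
      by (simp only: key)
  qed
qed

end
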